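(* Let $\mathcal{F}_2$ be the ($5$-dimensional) space of framed $2$-gons and let $\mathcal D$ be the distribution on $\mathcal{F}_2$ consisting of those infinitesimal motions for which the velocity of $B_1$ is parallel to $u_1$ and the velocity of $B_2$ is parallel to $u_2$. Then $\mathcal D$ is bracket generating of type $(3,5)$: it has rank $3$, and at every point of $\mathcal{F}_2$ the values of vector fields tangent to $\mathcal D$ together with their first commutators span the tangent space of $\mathcal F_2$.
   Context: For nonzero vectors $u,v$ in the plane, $\angle(u,v)\in\mathbb{R}/2\pi\mathbb{Z}$ is the angle through which $u$ must be rotated counterclockwise to align with $v$. A framed $2$-gon is a segment $B_1B_2$ with $B_1\neq B_2$ together with unit vectors $u_1$ at $B_1$ and $u_2$ at $B_2$ such that $\angle(u_1,B_2-B_1)=\angle(B_2-B_1,u_2)$; the framings $(u_1,u_2)$ and $(-u_1,-u_2)$ are identified. $\mathcal{F}_2$ is the space of framed $2$-gons; it has coordinates $(x,y,\varphi,r,\alpha)$, where $(x,y)$ is the midpoint of $B_1B_2$, $\varphi$ its direction, $r>0$ its half-length, and $\alpha$ the angle the framing vectors make with the segment. *)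

theory Defs
  imports "HOL-Analysis.Analysis"
begin

text \<open>We work on the open set
  of coordinates with r > 0 (the universal-cover chart of F_2; phi is
  taken mod 2pi and alpha mod pi in F_2 itself, which is irrelevant for
  the pointwise, local statement).\<close>

type_synonym pt5 = "real \<times> real \<times> real \<times> real \<times> real"

definition F2coords :: "pt5 set" where
  "F2coords = {(x, y, phi, r, alpha). r > 0}"

definition vertB1 :: "pt5 \<Rightarrow> complex" where
  "vertB1 = (\<lambda>(x, y, phi, r, alpha). Complex x y - complex_of_real r * cis phi)"

definition vertB2 :: "pt5 \<Rightarrow> complex" where
  "vertB2 = (\<lambda>(x, y, phi, r, alpha). Complex x y + complex_of_real r * cis phi)"

text \<open>Framing vectors: u1 is obtained from the direction of B2 - B1 by rotating
  clockwise by alpha, u2 by rotating counterclockwise by alpha, so that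
  angle(u1, B2 - B1) = alpha = angle(B2 - B1, u2).\<close>

definition frame1 :: "pt5 \<Rightarrow> complex" where
  "frame1 = (\<lambda>(x, y, phi, r, alpha). cis (phi - alpha))"

definition frame2 :: "pt5 \<Rightarrow> complex" where
  "frame2 = (\<lambda>(x, y, phi, r, alpha). cis (phi + alpha))"

definition distD :: "pt5 \<Rightarrow> pt5 set" where
  "distD p = {v. (\<exists>a::real. frechet_derivative vertB1 (at p) v = a *\<^sub>R frame1 p) \<and>
                 (\<exists>b::real. frechet_derivative vertB2 (at p) v = b *\<^sub>R frame2 p)}"

fun Ck_on :: "nat \<Rightarrow> ('a::real_normed_vector \<Rightarrow> 'b::real_normed_vector) \<Rightarrow> 'a set \<Rightarrow> bool" where
  "Ck_on 0 f S = continuous_on S f"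
| "Ck_on (Suc k) f S = (\<exists>f'. (\<forall>x\<in>S. (f has_derivative f' x) (at x)) \<and>
                           (\<forall>v. Ck_on k (\<lambda>x. f' x v) S))"

definition smooth_on :: "('a::real_normed_vector \<Rightarrow> 'b::real_normed_vector) \<Rightarrow> 'a set \<Rightarrow> bool" where
  "smooth_on f S = (\<forall>k. Ck_on k f S)"

definition tangent_field :: "(pt5 \<Rightarrow> pt5) \<Rightarrow> bool" where
  "tangent_field X = (smooth_on X F2coords \<and> (\<forall>p\<in>F2coords. X p \<in> distD p))"

definition lie_bracket :: "(pt5 \<Rightarrow> pt5) \<Rightarrow> (pt5 \<Rightarrow> pt5) \<Rightarrow> pt5 \<Rightarrow> pt5" where
  "lie_bracket X Y p = frechet_derivative Y (at p) (X p) - frechet_derivative X (at p) (Y p)"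

end

theory Submission
  imports Defs
begin


lemma Ck_const: "Ck_on k (\<lambda>x. c) S"
proof (induction k arbitrary: c)
  case 0 then show ?case by simp
next
  case (Suc k)
  show ?case by (auto intro!: exI[of _ "\<lambda>x v. 0"] Suc)
qed

lemma Ck_lin: "bounded_linear l \<Longrightarrow> Ck_on k l S"
proof (cases k)
  case 0
  assume "bounded_linear l" then show ?thesis using 0 by (simp add: linear_continuous_on)
next
  case (Suc k')
  assume l: "bounded_linear l"
  show ?thesis unfolding Suc
    by (auto intro!: exI[of _ "\<lambda>x. l"] Ck_const bounded_linear_imp_has_derivative l)
qed

lemma Ck_mono: "Ck_on (Suc k) f S \<Longrightarrow> Ck_on k f S"
proof (induction k arbitrary: f)
  case 0
  then obtain f' where "\<forall>x\<in>S. (f has_derivative f' x) (at x)" by auto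
  then show ?case
    by (auto intro!: continuous_at_imp_continuous_on dest: has_derivative_continuous)
next
  case (Suc k)
  then obtain f' where "\<forall>x\<in>S. (f has_derivative f' x) (at x)" "\<forall>v. Ck_on (Suc k) (\<lambda>x. f' x v) S"
    by auto
  then show ?case using Suc.IH by auto
qed

lemma Ck_add: "Ck_on k f S \<Longrightarrow> Ck_on k g S \<Longrightarrow> Ck_on k (\<lambda>x. f x + g x) S"
proof (induction k arbitrary: f g)
  case 0 then show ?case by (simp add: continuous_on_add)
next
  case (Suc k)
  then obtain f' g' where "\<forall>x\<in>S. (f has_derivative f' x) (at x)" "\<forall>v. Ck_on k (\<lambda>x. f' x v) S"
    "\<forall>x\<in>S. (g has_derivative g' x) (at x)" "\<forall>v. Ck_on k (\<lambda>x. g' x v) S"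
    by auto
  then show ?case using Suc.IH
    by (auto intro!: exI[of _ "\<lambda>x v. f' x v + g' x v"] has_derivative_add)
qed

lemma Ck_mult: "Ck_on k f S \<Longrightarrow> Ck_on k g S \<Longrightarrow> Ck_on k (\<lambda>x. (f x :: real) * g x) S"
proof (induction k arbitrary: f g)
  case 0 then show ?case by (simp add: continuous_on_mult)
next
  case (Suc k)
  then obtain f' g' where d: "\<forall>x\<in>S. (f has_derivative f' x) (at x)" "\<forall>v. Ck_on k (\<lambda>x. f' x v) S"
    "\<forall>x\<in>S. (g has_derivative g' x) (at x)" "\<forall>v. Ck_on k (\<lambda>x. g' x v) S"
    by auto
  have fk: "Ck_on k f S" "Ck_on k g S" using Suc.prems Ck_mono by blast+
  show ?case
    apply (simp only: Ck_on.simps)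
    apply (rule exI[of _ "\<lambda>x v. f x * g' x v + f' x v * g x"])
    using d fk by (auto intro!: has_derivative_mult Ck_add Suc.IH)
qed

lemma Ck_uminus: "Ck_on k f S \<Longrightarrow> Ck_on k (\<lambda>x. - (f x :: real)) S"
  using Ck_mult[OF Ck_const[of k "-1"], of f S] by simp

lemma Ck_sincos: "bounded_linear l \<Longrightarrow> Ck_on k (\<lambda>x. sin (l x :: real)) S \<and> Ck_on k (\<lambda>x. cos (l x)) S"
proof (induction k)
  case 0 then show ?case
    using linear_continuous_on[of l S] by (auto intro!: continuous_on_sin continuous_on_cos)
next
  case (Suc k)
  have d1: "((\<lambda>x. sin (l x)) has_derivative (\<lambda>v. cos (l x) * l v)) (at x)" for x
    using Suc.prems by (auto intro!: derivative_eq_intros bounded_linear_imp_has_derivative simp: fun_eq_iff)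
  have d2: "((\<lambda>x. cos (l x)) has_derivative (\<lambda>v. sin (l x) * (- l v))) (at x)" for x
    using Suc.prems by (auto intro!: derivative_eq_intros bounded_linear_imp_has_derivative simp: fun_eq_iff)
  show ?case
    apply (simp only: Ck_on.simps)
    apply (rule conjI)
     apply (rule exI[of _ "\<lambda>x v. cos (l x) * l v"])
    using d1 d2 Suc apply (auto intro!: Ck_mult Ck_const)[1]
     apply (rule exI[of _ "\<lambda>x v. sin (l x) * (- l v)"])
    using d1 d2 Suc apply (auto intro!: Ck_mult Ck_const Ck_uminus)[1]
    done
qed

lemma Ck_pair: "Ck_on k f S \<Longrightarrow> Ck_on k g S \<Longrightarrow> Ck_on k (\<lambda>x. (f x, g x)) S"
proof (induction k arbitrary: f g)
  case 0 then show ?case by (simp add: continuous_on_Pair)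
next
  case (Suc k)
  then obtain f' g' where "\<forall>x\<in>S. (f has_derivative f' x) (at x)" "\<forall>v. Ck_on k (\<lambda>x. f' x v) S"
    "\<forall>x\<in>S. (g has_derivative g' x) (at x)" "\<forall>v. Ck_on k (\<lambda>x. g' x v) S"
    by auto
  then show ?case using Suc.IH
    by (auto intro!: exI[of _ "\<lambda>x v. (f' x v, g' x v)"] has_derivative_Pair)
qed

lemma Complex_has_derivative:
  assumes "(f has_derivative f') F" "(g has_derivative g') F"
  shows "((\<lambda>q. Complex (f q) (g q)) has_derivative (\<lambda>v. Complex (f' v) (g' v))) F"
proof -
  have e: "\<And>a b. Complex a b = complex_of_real a + \<i> * complex_of_real b"
    by (simp add: complex_eq_iff)
  show ?thesis unfolding e
    by (intro derivative_intros assms)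
qed



lemma par_iff: "(\<exists>a::real. Complex u w = a *\<^sub>R cis t) \<longleftrightarrow> u * sin t = w * cos t"
proof
  assume "\<exists>a::real. Complex u w = a *\<^sub>R cis t"
  then obtain a where "Complex u w = a *\<^sub>R cis t" by blast
  then have "u = a * cos t" "w = a * sin t" by (auto simp: complex_eq_iff cis.sel scaleR_conv_of_real)
  then show "u * sin t = w * cos t" by simp
next
  assume h: "u * sin t = w * cos t"
  have "(u * cos t + w * sin t) * cos t = u * cos t * cos t + sin t * (w * cos t)"
    by (simp add: algebra_simps)
  also have "\<dots> = u * (cos t * cos t + sin t * sin t)"
    unfolding h[symmetric] by algebra
  also have "\<dots> = u" by (simp add: power2_eq_square[symmetric])
  finally have 1: "u = (u * cos t + w * sin t) * cos t" by simp
  have "(u * cos t + w * sin t) * sin t = cos t * (u * sin t) + w * sin t * sin t"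
    by (simp add: algebra_simps)
  also have "\<dots> = w * (cos t * cos t + sin t * sin t)"
    unfolding h by algebra
  also have "\<dots> = w" by (simp add: power2_eq_square[symmetric])
  finally have 2: "w = (u * cos t + w * sin t) * sin t" by simp
  from 1 2 show "\<exists>a::real. Complex u w = a *\<^sub>R cis t"
    by (intro exI[of _ "u * cos t + w * sin t"]) (simp add: complex_eq_iff scaleR_conv_of_real)
qed

lemma dB1: "frechet_derivative vertB1 (at (x,y,ph,r,al)) v =
   Complex (fst v - fst (snd (snd (snd v))) * cos ph + r * sin ph * fst (snd (snd v)))
           (fst (snd v) - fst (snd (snd (snd v))) * sin ph - r * cos ph * fst (snd (snd v)))"
proof -
  have e: "vertB1 = (\<lambda>q. Complex (fst q - fst (snd (snd (snd q))) * cos (fst (snd (snd q))))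
     (fst (snd q) - fst (snd (snd (snd q))) * sin (fst (snd (snd q)))))"
    by (auto simp: vertB1_def fun_eq_iff cis.ctr complex_eq_iff)
  have d: "(vertB1 has_derivative (\<lambda>v. Complex (fst v - (fst (snd (snd (snd v))) * cos ph - r * sin ph * fst (snd (snd v))))
      (fst (snd v) - (fst (snd (snd (snd v))) * sin ph + r * cos ph * fst (snd (snd v)))))) (at (x,y,ph,r,al))"
    unfolding e
    by (rule Complex_has_derivative; auto intro!: derivative_eq_intros simp: fun_eq_iff algebra_simps)
  show ?thesis by (subst frechet_derivative_at[OF d, symmetric]) (simp add: algebra_simps)
qed

lemma dB2: "frechet_derivative vertB2 (at (x,y,ph,r,al)) v =
   Complex (fst v + fst (snd (snd (snd v))) * cos ph - r * sin ph * fst (snd (snd v)))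
           (fst (snd v) + fst (snd (snd (snd v))) * sin ph + r * cos ph * fst (snd (snd v)))"
proof -
  have e: "vertB2 = (\<lambda>q. Complex (fst q + fst (snd (snd (snd q))) * cos (fst (snd (snd q))))
     (fst (snd q) + fst (snd (snd (snd q))) * sin (fst (snd (snd q)))))"
    by (auto simp: vertB2_def fun_eq_iff cis.ctr complex_eq_iff)
  have d: "(vertB2 has_derivative (\<lambda>v. Complex (fst v + (fst (snd (snd (snd v))) * cos ph - r * sin ph * fst (snd (snd v))))
      (fst (snd v) + (fst (snd (snd (snd v))) * sin ph + r * cos ph * fst (snd (snd v)))))) (at (x,y,ph,r,al))"
    unfolding e
    by (rule Complex_has_derivative; auto intro!: derivative_eq_intros simp: fun_eq_iff algebra_simps)
  show ?thesis by (subst frechet_derivative_at[OF d, symmetric]) (simp add: algebra_simps)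
qed

lemma lin4: "(l1::real) - r1 = - bb - aa + p + q \<Longrightarrow> l2 - r2 = - bb + aa + p - q \<Longrightarrow>
   (l1 = r1 \<and> l2 = r2) \<longleftrightarrow> (bb = p \<and> aa = q)"
  by linarith

lemma conds_iff:
  fixes dx dy dph dr C S c s r :: real
  assumes h1: "C^2 + S^2 = 1" and h2: "c^2 + s^2 = 1"
  shows "((dx - dr * C + r * S * dph) * (S * c - C * s) = (dy - dr * S - r * C * dph) * (C * c + S * s) \<and>
          (dx + dr * C - r * S * dph) * (S * c + C * s) = (dy + dr * S + r * C * dph) * (C * c - S * s))
     \<longleftrightarrow> (c * (- dx * S + dy * C) = s * dr \<and> s * (dx * C + dy * S) = c * r * dph)"
proof -
  have E1: "(dx - dr * C + r * S * dph) * (S * c - C * s) - (dy - dr * S - r * C * dph) * (C * c + S * s)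
      = - (c * (- dx * S + dy * C)) - s * (dx * C + dy * S) + s * dr + c * r * dph"
    using h1 by algebra
  have E2: "(dx + dr * C - r * S * dph) * (S * c + C * s) - (dy + dr * S + r * C * dph) * (C * c - S * s)
      = - (c * (- dx * S + dy * C)) + s * (dx * C + dy * S) + s * dr - c * r * dph"
    using h1 by algebra
  show ?thesis by (rule lin4[OF E1 E2])
qed

definition "Q1 ph al v \<longleftrightarrow> cos al * (- fst v * sin ph + fst (snd v) * cos ph) = sin al * fst (snd (snd (snd v)))"
definition "Q2 ph r al v \<longleftrightarrow> sin al * (fst v * cos ph + fst (snd v) * sin ph) = cos al * r * fst (snd (snd v))"

lemma distD_eq: "distD (x,y,ph,r,al) = {v. Q1 ph al v \<and> Q2 ph r al v}"
proof -
  have "v \<in> distD (x,y,ph,r,al) \<longleftrightarrow> Q1 ph al v \<and> Q2 ph r al v" for v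
    unfolding distD_def mem_Collect_eq dB1 dB2 frame1_def frame2_def Q1_def Q2_def prod.case par_iff
      sin_diff cos_diff sin_add cos_add
    by (rule conds_iff[OF sin_cos_squared_add2[of ph] sin_cos_squared_add2[of al]])
  then show ?thesis by blast
qed

definition "V1 ph r al = (r * cos al * cos ph, r * cos al * sin ph, sin al, 0::real, 0::real)"
definition "V2 ph r al = (- sin al * sin ph, sin al * cos ph, 0::real, cos al, 0::real)"
definition "V3 = (0::real, 0::real, 0::real, 0::real, 1::real)"

definition "LQ ph r al v = (cos al * (- fst v * sin ph + fst (snd v) * cos ph) - sin al * fst (snd (snd (snd v))),
   sin al * (fst v * cos ph + fst (snd v) * sin ph) - cos al * r * fst (snd (snd v)))"

lemma LQ_lin: "linear (LQ ph r al)"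
  by (rule linearI) (simp_all add: LQ_def algebra_simps)

lemma subspace_Q: "subspace {v. Q1 ph al v \<and> Q2 ph r al v}"
proof -
  have e: "{v. Q1 ph al v \<and> Q2 ph r al v} = {v. LQ ph r al v = 0}"
    by (auto simp: Q1_def Q2_def LQ_def zero_prod_def)
  show ?thesis unfolding e by (rule linear_subspace_kernel[OF LQ_lin])
qed

lemma decomp_alg:
  fixes C S c s r dx dy dph dr k1 k2 :: real
  assumes h1: "C^2 + S^2 = 1" and h2: "c^2 + s^2 = 1"
    and q1: "c * (- dx * S + dy * C) = s * dr" and q2: "s * (dx * C + dy * S) = c * r * dph"
    and k1: "r * k1 = c * (dx * C + dy * S) + s * r * dph"
    and k2: "k2 = s * (- dx * S + dy * C) + c * dr"
  shows "k1 * (r * c * C) + k2 * (- s * S) = dx" "k1 * (r * c * S) + k2 * (s * C) = dy"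
    "r * (k1 * s - dph) = 0" "k2 * c = dr"
  using assms by algebra+

lemma distD_span:
  assumes r: "r \<noteq> 0"
  shows "distD (x,y,ph,r,al) = span {V1 ph r al, V2 ph r al, V3}"
proof
  show "span {V1 ph r al, V2 ph r al, V3} \<subseteq> distD (x,y,ph,r,al)"
    unfolding distD_eq
  proof (rule span_minimal[OF _ subspace_Q])
    have t: "cos ph * cos ph + sin ph * sin ph = 1" by simp
    have "Q1 ph al (V1 ph r al)" unfolding V1_def Q1_def by (simp add: algebra_simps)
    moreover have "Q2 ph r al (V1 ph r al)" unfolding V1_def Q2_def fst_conv snd_conv using t by algebra
    moreover have "Q1 ph al (V2 ph r al)" unfolding V2_def Q1_def fst_conv snd_conv using t by algebra
    moreover have "Q2 ph r al (V2 ph r al)" unfolding V2_def Q2_def by (simp add: algebra_simps)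
    moreover have "Q1 ph al V3" "Q2 ph r al V3" unfolding V3_def Q1_def Q2_def by simp_all
    ultimately show "{V1 ph r al, V2 ph r al, V3} \<subseteq> {v. Q1 ph al v \<and> Q2 ph r al v}"
      by auto
  qed
next
  show "distD (x,y,ph,r,al) \<subseteq> span {V1 ph r al, V2 ph r al, V3}"
  proof
    fix v assume "v \<in> distD (x,y,ph,r,al)"
    then have q: "Q1 ph al v" "Q2 ph r al v" unfolding distD_eq by auto
    obtain dx dy dph dr dal where v: "v = (dx,dy,dph,dr,dal)" by (cases v) auto
    define k1 where "k1 = (cos al * (dx * cos ph + dy * sin ph)) / r + sin al * dph"
    define k2 where "k2 = sin al * (- dx * sin ph + dy * cos ph) + cos al * dr"
    have hk1: "r * k1 = cos al * (dx * cos ph + dy * sin ph) + sin al * r * dph"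
      using r unfolding k1_def by (simp add: field_simps)
    note D = decomp_alg[OF sin_cos_squared_add2[of ph] sin_cos_squared_add2[of al] _ _ hk1 k2_def]
    have q1: "cos al * (- dx * sin ph + dy * cos ph) = sin al * dr"
      and q2: "sin al * (dx * cos ph + dy * sin ph) = cos al * r * dph"
      using q unfolding v Q1_def Q2_def by auto
    have c3: "k1 * sin al = dph" using D(3)[OF q1 q2] r by simp
    have "v = k1 *\<^sub>R V1 ph r al + k2 *\<^sub>R V2 ph r al + dal *\<^sub>R V3"
      using D(1)[OF q1 q2] D(2)[OF q1 q2] D(4)[OF q1 q2] c3
      unfolding v V1_def V2_def V3_def by (simp add: algebra_simps)
    then show "v \<in> span {V1 ph r al, V2 ph r al, V3}"
      by (simp add: span_add span_scale span_base)
  qed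
qed

lemma indep_alg:
  fixes C S c s r k1 k2 :: real
  assumes h1: "C^2 + S^2 = 1" and h2: "c^2 + s^2 = 1" and r: "r \<noteq> 0"
    and e1: "k1 * (r * c * C) + k2 * (- s * S) = 0" and e2: "k1 * (r * c * S) + k2 * (s * C) = 0"
    and e3: "k1 * s = 0" and e4: "k2 * c = 0"
  shows "k1 = 0 \<and> k2 = 0"
proof -
  have "r * (k1 * c) = 0" using h1 e1 e2 by algebra
  then have a: "k1 * c = 0" using r by simp
  have "k2 * s = 0" using h1 e1 e2 by algebra
  then show ?thesis using a e3 e4 h2 by algebra
qed

lemma V_distinct: "V1 ph r al \<noteq> V3" "V2 ph r al \<noteq> V3" "V1 ph r al \<noteq> V2 ph r al"
proof -
  show "V1 ph r al \<noteq> V3" "V2 ph r al \<noteq> V3" by (simp_all add: V1_def V2_def V3_def)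
  show "V1 ph r al \<noteq> V2 ph r al"
  proof
    assume "V1 ph r al = V2 ph r al"
    then have "sin al = 0" "cos al = 0" by (simp_all add: V1_def V2_def)
    then show False using sin_cos_squared_add[of al] by simp
  qed
qed

lemma V_indep:
  assumes r: "r \<noteq> 0"
  shows "independent {V1 ph r al, V2 ph r al, V3}"
  unfolding independent_explicit
proof (intro conjI allI impI ballI)
  show "finite {V1 ph r al, V2 ph r al, V3}" by simp
  fix k assume h: "(\<Sum>v\<in>{V1 ph r al, V2 ph r al, V3}. k v *\<^sub>R v) = 0"
  have "k (V1 ph r al) *\<^sub>R V1 ph r al + k (V2 ph r al) *\<^sub>R V2 ph r al + k V3 *\<^sub>R V3 = 0"
    using h V_distinct[of ph r al] by (simp add: sum.insert add.assoc)
  then have e: "k (V1 ph r al) * (r * cos al * cos ph) + k (V2 ph r al) * (- sin al * sin ph) = 0"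
    "k (V1 ph r al) * (r * cos al * sin ph) + k (V2 ph r al) * (sin al * cos ph) = 0"
    "k (V1 ph r al) * sin al = 0" "k (V2 ph r al) * cos al = 0" "k V3 = 0"
    by (simp_all add: V1_def V2_def V3_def zero_prod_def)
  have "k (V1 ph r al) = 0 \<and> k (V2 ph r al) = 0"
    by (rule indep_alg[OF sin_cos_squared_add2[of ph] sin_cos_squared_add2[of al] r e(1) e(2) e(3) e(4)])
  fix v assume "v \<in> {V1 ph r al, V2 ph r al, V3}"
  then show "k v = 0" using e(5) \<open>k (V1 ph r al) = 0 \<and> k (V2 ph r al) = 0\<close> by auto
qed

lemma part1:
  assumes "p \<in> F2coords"
  shows "subspace (distD p) \<and> dim (distD p) = 3"
proof -
  obtain x y ph r al where p: "p = (x,y,ph,r,al)" by (cases p) auto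
  have r: "r \<noteq> 0" using assms unfolding p F2coords_def by auto
  have "card {V1 ph r al, V2 ph r al, V3} = 3" using V_distinct[of ph r al] by auto
  then show ?thesis unfolding p distD_span[OF r]
    using dim_span_eq_card_independent[OF V_indep[OF r]] by simp
qed

definition "Y1 (q::pt5) = (fst (snd (snd (snd q))) * cos (snd (snd (snd (snd q)))) * cos (fst (snd (snd q))),
   fst (snd (snd (snd q))) * cos (snd (snd (snd (snd q)))) * sin (fst (snd (snd q))),
   sin (snd (snd (snd (snd q)))), 0::real, 0::real)"
definition "Y2 (q::pt5) = (- sin (snd (snd (snd (snd q)))) * sin (fst (snd (snd q))),
   sin (snd (snd (snd (snd q)))) * cos (fst (snd (snd q))), 0::real,
   cos (snd (snd (snd (snd q)))), 0::real)"
definition "Y3 (q::pt5) = V3"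

lemma bl_ph: "bounded_linear (\<lambda>q::pt5. fst (snd (snd q)))"
  by (intro bounded_linear_fst_comp bounded_linear_snd_comp bounded_linear_ident)
lemma bl_r: "bounded_linear (\<lambda>q::pt5. fst (snd (snd (snd q))))"
  by (intro bounded_linear_fst_comp bounded_linear_snd_comp bounded_linear_ident)
lemma bl_al: "bounded_linear (\<lambda>q::pt5. snd (snd (snd (snd q))))"
  by (intro bounded_linear_fst_comp bounded_linear_snd_comp bounded_linear_ident)

lemma Ck_basic:
  "Ck_on k (\<lambda>q::pt5. fst (snd (snd (snd q)))) S"
  "Ck_on k (\<lambda>q::pt5. sin (fst (snd (snd q)))) S"
  "Ck_on k (\<lambda>q::pt5. cos (fst (snd (snd q)))) S"
  "Ck_on k (\<lambda>q::pt5. sin (snd (snd (snd (snd q))))) S"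
  "Ck_on k (\<lambda>q::pt5. cos (snd (snd (snd (snd q))))) S"
  using Ck_lin[OF bl_r] Ck_sincos[OF bl_ph] Ck_sincos[OF bl_al] by auto

lemma smooth_Y1: "smooth_on Y1 S"
  unfolding smooth_on_def Y1_def
  by (intro allI Ck_pair Ck_mult[of _ "\<lambda>x. _ x * _ x"] Ck_mult Ck_basic Ck_const)

lemma smooth_Y2: "smooth_on Y2 S"
  unfolding smooth_on_def Y2_def
  by (intro allI Ck_pair Ck_mult Ck_uminus Ck_basic Ck_const)

lemma smooth_Y3: "smooth_on Y3 S"
  unfolding smooth_on_def Y3_def by (intro allI Ck_const)

lemma Y_at: "Y1 (x,y,ph,r,al) = V1 ph r al" "Y2 (x,y,ph,r,al) = V2 ph r al" "Y3 (x,y,ph,r,al) = V3"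
  by (simp_all add: Y1_def V1_def Y2_def V2_def Y3_def)

lemma tangent_Y: "tangent_field Y1" "tangent_field Y2" "tangent_field Y3"
proof -
  have "Y1 p \<in> distD p \<and> Y2 p \<in> distD p \<and> Y3 p \<in> distD p" if "p \<in> F2coords" for p
  proof -
    obtain x y ph r al where p: "p = (x,y,ph,r,al)" by (cases p) auto
    have r: "r \<noteq> 0" using that unfolding p F2coords_def by auto
    show ?thesis unfolding p distD_span[OF r] Y_at by (simp add: span_base)
  qed
  then show "tangent_field Y1" "tangent_field Y2" "tangent_field Y3"
    unfolding tangent_field_def using smooth_Y1 smooth_Y2 smooth_Y3 by auto
qed

lemma dY3: "frechet_derivative Y3 (at p) = (\<lambda>v. 0)"
  unfolding Y3_def by (rule frechet_derivative_at[symmetric]) (rule has_derivative_const)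

lemma dY1: "frechet_derivative Y1 (at (x,y,ph,r,al)) V3 = (- r * sin al * cos ph, - r * sin al * sin ph, cos al, 0, 0)"
proof -
  have d: "(Y1 has_derivative (\<lambda>v. (
      fst (snd (snd (snd v))) * cos al * cos ph - r * sin al * snd (snd (snd (snd v))) * cos ph - r * cos al * sin ph * fst (snd (snd v)),
      fst (snd (snd (snd v))) * cos al * sin ph - r * sin al * snd (snd (snd (snd v))) * sin ph + r * cos al * cos ph * fst (snd (snd v)),
      cos al * snd (snd (snd (snd v))), 0, 0))) (at (x,y,ph,r,al))"
    unfolding Y1_def
    by (auto intro!: derivative_eq_intros simp: fun_eq_iff algebra_simps zero_prod_def)
  show ?thesis by (subst frechet_derivative_at[OF d, symmetric]) (simp add: V3_def)
qed

lemma dY2: "frechet_derivative Y2 (at (x,y,ph,r,al)) V3 = (- cos al * sin ph, cos al * cos ph, 0, - sin al, 0)"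
proof -
  have d: "(Y2 has_derivative (\<lambda>v. (
      - cos al * snd (snd (snd (snd v))) * sin ph - sin al * cos ph * fst (snd (snd v)),
      cos al * snd (snd (snd (snd v))) * cos ph - sin al * sin ph * fst (snd (snd v)),
      0, - sin al * snd (snd (snd (snd v))), 0))) (at (x,y,ph,r,al))"
    unfolding Y2_def
    by (auto intro!: derivative_eq_intros simp: fun_eq_iff algebra_simps zero_prod_def)
  show ?thesis by (subst frechet_derivative_at[OF d, symmetric]) (simp add: V3_def prod_eq_iff)
qed

lemma decomp2_alg:
  fixes C S c s r dx dy dph dr m1 m2 n1 n2 :: real
  assumes h1: "C^2 + S^2 = 1" and h2: "c^2 + s^2 = 1"
    and m1: "r * m1 = c * (dx * C + dy * S) + r * s * dph"
    and m2: "r * m2 = - s * (dx * C + dy * S) + r * c * dph"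
    and n1: "n1 = s * (- dx * S + dy * C) + c * dr"
    and n2: "n2 = c * (- dx * S + dy * C) - s * dr"
  shows "m1 * (r * c * C) + m2 * (- r * s * C) + n1 * (- s * S) + n2 * (- c * S) = dx"
    "m1 * (r * c * S) + m2 * (- r * s * S) + n1 * (s * C) + n2 * (c * C) = dy"
    "r * (m1 * s + m2 * c - dph) = 0" "n1 * c + n2 * (- s) = dr"
  using assms by algebra+

lemma part2:
  assumes "p \<in> F2coords"
  shows "span ({X p | X. tangent_field X} \<union>
                  {lie_bracket X Y p | X Y. tangent_field X \<and> tangent_field Y}) = UNIV"
    (is "span ?T = UNIV")
proof -
  obtain x y ph r al where p: "p = (x,y,ph,r,al)" by (cases p) auto
  have r: "r \<noteq> 0" using assms unfolding p F2coords_def by auto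
  define W1 where "W1 = (- r * sin al * cos ph, - r * sin al * sin ph, cos al, 0::real, 0::real)"
  define W2 where "W2 = (- cos al * sin ph, cos al * cos ph, 0::real, - sin al, 0::real)"
  have "Y1 p \<in> ?T" "Y2 p \<in> ?T" "Y3 p \<in> ?T"
    using tangent_Y by blast+
  then have "V1 ph r al \<in> ?T" "V2 ph r al \<in> ?T" "V3 \<in> ?T"
    unfolding p Y_at by simp_all
  moreover have "lie_bracket Y3 Y1 p = W1" "lie_bracket Y3 Y2 p = W2"
    unfolding lie_bracket_def p dY3 Y_at dY1 dY2 W1_def W2_def by simp_all
  then have "W1 \<in> ?T" "W2 \<in> ?T" using tangent_Y by blast+
  ultimately have I: "V1 ph r al \<in> span ?T" "V2 ph r al \<in> span ?T" "V3 \<in> span ?T" "W1 \<in> span ?T" "W2 \<in> span ?T"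
    by (auto intro: span_base)
  have "v \<in> span ?T" for v
  proof -
    obtain dx dy dph dr dal where v: "v = (dx,dy,dph,dr,dal)" by (cases v) auto
    define m1 where "m1 = (cos al * (dx * cos ph + dy * sin ph)) / r + sin al * dph"
    define m2 where "m2 = - (sin al * (dx * cos ph + dy * sin ph)) / r + cos al * dph"
    define n1 where "n1 = sin al * (- dx * sin ph + dy * cos ph) + cos al * dr"
    define n2 where "n2 = cos al * (- dx * sin ph + dy * cos ph) - sin al * dr"
    have hm1: "r * m1 = cos al * (dx * cos ph + dy * sin ph) + r * sin al * dph"
      using r unfolding m1_def by (simp add: field_simps)
    have hm2: "r * m2 = - sin al * (dx * cos ph + dy * sin ph) + r * cos al * dph"
      using r unfolding m2_def by (simp add: field_simps)
    note D = decomp2_alg[OF sin_cos_squared_add2[of ph] sin_cos_squared_add2[of al] hm1 hm2 n1_def n2_def]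
    have c3: "m1 * sin al + m2 * cos al = dph" using D(3) r by simp
    have "v = m1 *\<^sub>R V1 ph r al + m2 *\<^sub>R W1 + n1 *\<^sub>R V2 ph r al + n2 *\<^sub>R W2 + dal *\<^sub>R V3"
      using D(1) D(2) D(4) c3
      unfolding v V1_def V2_def V3_def W1_def W2_def by (simp add: algebra_simps)
    then show ?thesis using I by (simp add: span_add span_scale)
  qed
  then show ?thesis by auto
qed

theorem theorem5p1:
  shows "(\<forall>p\<in>F2coords. subspace (distD p) \<and> dim (distD p) = 3) \<and>
         (\<forall>p\<in>F2coords.
            span ({X p | X. tangent_field X} \<union>
                  {lie_bracket X Y p | X Y. tangent_field X \<and> tangent_field Y}) = UNIV)"
  using part1 part2 by blast

end
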